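(* Let $T_1^*\in[0,1]$ and $T_2^*=(T_1^* )^3$, and let $\tilde W^*=\{\tilde h\in\tilde W: t(K_2,\tilde h)=T_1^*,\ t(K_3,\tilde h)=T_2^*\}$. Then $$\inf_{\tilde h\in\tilde W^*}I(\tilde h)=I\big((T_2^* )^{1/3}\big)=I(T_1^* ).$$
   Context: $W$ is the set of measurable symmetric $h:[0,1]^2\to[0,1]$, $\tilde W$ its quotient under relabelling by measure-preserving bijections of $[0,1]$. $t(K_2,h)=\int h(x,y)\,dx\,dy$ and $t(K_3,h)=\int h(x_1,x_2)h(x_2,x_3)h(x_3,x_1)\,dx_1dx_2dx_3$. $I(u)=\tfrac12u\log u+\tfrac12(1-u)\log(1-u)$ with $0\log0=0$, and $I(h)=\int_{[0,1]^2}I(h(x,y))\,dx\,dy$ (well defined on $\tilde W$). *)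

theory Defs
  imports "HOL-Analysis.Analysis"
begin

text \<open>Graphons: measurable symmetric functions [0,1]^2 -> [0,1], represented as
  curried real functions; only values on the unit square matter.\<close>

definition unit_sq :: "(real \<times> real) set" where
  "unit_sq = {0..1} \<times> {0..1}"

definition unit_cube :: "(real \<times> real \<times> real) set" where
  "unit_cube = {0..1} \<times> {0..1} \<times> {0..1}"

definition graphon :: "(real \<Rightarrow> real \<Rightarrow> real) \<Rightarrow> bool" where
  "graphon h \<longleftrightarrow>
     (\<lambda>(x, y). h x y) \<in> borel_measurable (lebesgue_on unit_sq) \<and>
     (\<forall>x\<in>{0..1}. \<forall>y\<in>{0..1}. h x y = h y x \<and> 0 \<le> h x y \<and> h x y \<le> 1)"

definition tK2 :: "(real \<Rightarrow> real \<Rightarrow> real) \<Rightarrow> real" where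
  "tK2 h = (\<integral>p. (case p of (x, y) \<Rightarrow> h x y) \<partial>(lebesgue_on unit_sq))"

definition tK3 :: "(real \<Rightarrow> real \<Rightarrow> real) \<Rightarrow> real" where
  "tK3 h = (\<integral>p. (case p of (x1, x2, x3) \<Rightarrow> h x1 x2 * h x2 x3 * h x3 x1)
              \<partial>(lebesgue_on unit_cube))"

definition xlogx :: "real \<Rightarrow> real" where
  "xlogx u = (if u = 0 then 0 else u * ln u)"

definition Ient :: "real \<Rightarrow> real" where
  "Ient u = xlogx u / 2 + xlogx (1 - u) / 2"

definition Igraphon :: "(real \<Rightarrow> real \<Rightarrow> real) \<Rightarrow> real" where
  "Igraphon h = (\<integral>p. Ient (case p of (x, y) \<Rightarrow> h x y) \<partial>(lebesgue_on unit_sq))"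

end

theory Submission
  imports Defs
begin

lemma sq_eq: "unit_sq = cbox (0,0) (1::real,1::real)"
  by (simp add: unit_sq_def cbox_Pair_eq)
lemma cube_eq: "unit_cube = cbox (0,0,0) (1::real,1::real,1::real)"
  by (simp add: unit_cube_def cbox_Pair_eq)
lemma sq_meas: "measure lebesgue unit_sq = 1"
  by (simp add: sq_eq content_Pair)
lemma cube_meas: "measure lebesgue unit_cube = 1"
  by (simp add: cube_eq content_Pair)
lemma sq_lm: "unit_sq \<in> lmeasurable" by (simp add: sq_eq)
lemma cube_lm: "unit_cube \<in> lmeasurable" by (simp add: cube_eq)
lemma sq_space: "space (lebesgue_on unit_sq) = unit_sq"
  using sq_lm by (simp add: fmeasurableD)
lemma cube_space: "space (lebesgue_on unit_cube) = unit_cube"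
  using cube_lm by (simp add: fmeasurableD)
lemma sq_const: "integral\<^sup>L (lebesgue_on unit_sq) (\<lambda>_. c) = (c::real)"
proof -
  have "measure (lebesgue_on unit_sq) unit_sq = 1"
    using sq_lm sq_meas by (subst measure_restrict_space) (auto simp: fmeasurableD)
  thus ?thesis by (subst lebesgue_integral_const) (simp add: sq_space)
qed
lemma sq_m1: "measure (lebesgue_on unit_sq) unit_sq = 1"
  using sq_lm sq_meas by (subst measure_restrict_space) (auto simp: fmeasurableD)
lemma cube_m1: "measure (lebesgue_on unit_cube) unit_cube = 1"
  using cube_lm cube_meas by (subst measure_restrict_space) (auto simp: fmeasurableD)
lemma cube_const: "integral\<^sup>L (lebesgue_on unit_cube) (\<lambda>_. c) = (c::real)"
proof -
  have "measure (lebesgue_on unit_cube) unit_cube = 1"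
    using cube_lm cube_meas by (subst measure_restrict_space) (auto simp: fmeasurableD)
  thus ?thesis by (subst lebesgue_integral_const) (simp add: cube_space)
qed

lemma Ient_meas: "Ient \<in> borel_measurable borel"
  unfolding Ient_def xlogx_def by measurable

lemma tangent: assumes "(u::real) \<ge> 0" "t > 0"
  shows "xlogx u \<ge> xlogx t + (ln t + 1) * (u - t)"
proof (cases "u = 0")
  case True thus ?thesis using assms by (simp add: xlogx_def)
next
  case False
  hence u: "u > 0" using assms by simp
  have "ln (t/u) \<le> t/u - 1" using u assms by (intro ln_le_minus_one) auto
  hence "u * ln (t/u) \<le> u * (t/u - 1)" using u by (intro mult_left_mono) auto
  hence "u * (ln t - ln u) \<le> t - u" using u assms by (simp add: ln_div algebra_simps)
  thus ?thesis using u assms by (simp add: xlogx_def algebra_simps)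
qed

lemma Ient_tangent: assumes "0 \<le> u" "u \<le> 1" "0 < t" "t < 1"
  shows "Ient u \<ge> Ient t + ((ln t - ln (1 - t))/2) * (u - t)"
proof -
  have a: "xlogx u \<ge> xlogx t + (ln t + 1) * (u - t)" using tangent assms by auto
  have b: "xlogx (1-u) \<ge> xlogx (1-t) + (ln (1-t) + 1) * ((1-u) - (1-t))"
    using tangent[of "1-u" "1-t"] assms by auto
  show ?thesis using a b unfolding Ient_def by (simp add: field_simps)
qed

lemma xlogx_bounds: assumes "0 \<le> u" "u \<le> 1" shows "u - 1 \<le> xlogx u" "xlogx u \<le> 0"
proof -
  show "u - 1 \<le> xlogx u" using tangent[of u 1] assms by (simp add: xlogx_def)
  show "xlogx u \<le> 0" using assms by (auto simp: xlogx_def mult_nonneg_nonpos)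
qed

lemma Ient_bound: assumes "0 \<le> u" "u \<le> 1" shows "\<bar>Ient u\<bar> \<le> 1"
  using xlogx_bounds[of u] xlogx_bounds[of "1-u"] assms unfolding Ient_def by auto

lemma lower:
  assumes g: "graphon h" and t: "tK2 h = T1" and T: "0 \<le> T1" "T1 \<le> 1"
  shows "Ient T1 \<le> Igraphon h"
proof -
  define M where "M = lebesgue_on unit_sq"
  define H where "H = (\<lambda>(x, y). h x y)"
  have sp: "space M = unit_sq" by (simp add: M_def sq_space)
  have Hm: "H \<in> borel_measurable M" using g by (simp add: graphon_def H_def M_def)
  have Hb: "\<And>p. p \<in> space M \<Longrightarrow> 0 \<le> H p \<and> H p \<le> 1"
    using g by (auto simp: graphon_def H_def sp unit_sq_def)
  have fm: "finite_measure M" using sq_lm by (simp add: M_def finite_measure_lebesgue_on)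
  have HI: "integrable M H"
    by (rule finite_measure.integrable_const_bound[OF fm, where B=1]) (use Hb Hm in auto)
  have IHm: "(\<lambda>p. Ient (H p)) \<in> borel_measurable M"
    using measurable_compose[OF Hm Ient_meas] by (simp add: o_def)
  have IHI: "integrable M (\<lambda>p. Ient (H p))"
    by (rule finite_measure.integrable_const_bound[OF fm, where B=1]) (use Hb IHm Ient_bound in auto)
  have intH: "integral\<^sup>L M H = T1" using t by (simp add: tK2_def H_def M_def)
  have IG: "Igraphon h = integral\<^sup>L M (\<lambda>p. Ient (H p))" by (simp add: Igraphon_def H_def M_def)
  consider "T1 = 0" | "T1 = 1" | "0 < T1 \<and> T1 < 1" using T by linarith
  then show ?thesis
  proof cases
    case 1
    have "AE p in M. H p = 0"
      using integral_nonneg_eq_0_iff_AE[OF HI] Hb intH 1 by (auto intro: AE_I2)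
    hence "AE p in M. Ient (H p) = 0" by eventually_elim (simp add: Ient_def xlogx_def)
    hence "integral\<^sup>L M (\<lambda>p. Ient (H p)) = integral\<^sup>L M (\<lambda>_. 0::real)"
      using integral_cong_AE[OF IHm borel_measurable_const] by blast
    thus ?thesis using 1 IG by (simp add: Ient_def xlogx_def)
  next
    case 2
    have I1: "integrable M (\<lambda>p. 1 - H p)"
      by (intro Bochner_Integration.integrable_diff finite_measure.integrable_const[OF fm] HI)
    have "integral\<^sup>L M (\<lambda>p. 1 - H p) = 0"
      using HI 2 intH sq_const by (simp add: M_def sq_m1 integral_diff finite_measure.integrable_const[OF fm[unfolded M_def]])
    hence "AE p in M. 1 - H p = 0"
      using integral_nonneg_eq_0_iff_AE[OF I1] Hb by (auto intro: AE_I2)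
    hence "AE p in M. Ient (H p) = 0" by eventually_elim (simp add: Ient_def xlogx_def)
    hence "integral\<^sup>L M (\<lambda>p. Ient (H p)) = integral\<^sup>L M (\<lambda>_. 0::real)"
      using integral_cong_AE[OF IHm borel_measurable_const] by blast
    thus ?thesis using 2 IG by (simp add: Ient_def xlogx_def)
  next
    case 3
    define c where "c = (ln T1 - ln (1 - T1))/2"
    have gI: "integrable M (\<lambda>p. (Ient T1 - c * T1) + c * H p)"
      by (intro Bochner_Integration.integrable_add integrable_mult_right finite_measure.integrable_const[OF fm] HI)
    have "integral\<^sup>L M (\<lambda>p. (Ient T1 - c * T1) + c * H p) = Ient T1"
      using HI intH sq_const by (simp add: M_def sq_m1 integral_add finite_measure.integrable_const[OF fm[unfolded M_def]])
    moreover have "integral\<^sup>L M (\<lambda>p. (Ient T1 - c * T1) + c * H p) \<le> integral\<^sup>L M (\<lambda>p. Ient (H p))"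
    proof (rule integral_mono[OF gI IHI])
      fix p assume "p \<in> space M"
      with Hb have "0 \<le> H p" "H p \<le> 1" by auto
      from Ient_tangent[OF this, of T1] 3 have "Ient T1 + c * (H p - T1) \<le> Ient (H p)"
        by (simp add: c_def)
      thus "Ient T1 - c * T1 + c * H p \<le> Ient (H p)" by (simp add: algebra_simps)
    qed
    ultimately show ?thesis using IG by simp
  qed
qed

theorem mainTheorem7:
  fixes T1 T2 :: real
  assumes "0 \<le> T1" and "T1 \<le> 1" and "T2 = T1 ^ 3"
  shows "(INF h \<in> {h. graphon h \<and> tK2 h = T1 \<and> tK3 h = T2}. Igraphon h) = Ient (root 3 T2)
       \<and> Ient (root 3 T2) = Ient T1"
proof -
  have r: "root 3 T2 = T1" using assms by (simp add: real_root_pos_unique)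
  define h0 where "h0 = (\<lambda>(x::real) (y::real). T1)"
  have g0: "graphon h0" using assms by (simp add: graphon_def h0_def)
  have k2: "tK2 h0 = T1" by (simp add: tK2_def h0_def sq_const sq_m1)
  have k3: "tK3 h0 = T2" using assms by (simp add: tK3_def h0_def split_beta cube_const power3_eq_cube cube_m1)
  have i0: "Igraphon h0 = Ient T1" by (simp add: Igraphon_def h0_def sq_const sq_m1)
  have "(INF h \<in> {h. graphon h \<and> tK2 h = T1 \<and> tK3 h = T2}. Igraphon h) = Ient T1"
    apply (rule cInf_eq_minimum)
    using g0 k2 k3 i0 apply force
    using lower assms by auto
  thus ?thesis using r by simp
qed

end
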